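(* There exist two dynamical systems $(X_1,T_1)$ and $(X_2,T_2)$, each having dense periodic measures, such that the product system $(X_1\times X_2,T_1\times T_2)$ does not have dense periodic measures.
   Context: A dynamical system is a pair $(X,T)$ where $X$ is a compact metrizable space and $T:X\to X$ a homeomorphism. $(X,T)$ has dense periodic measures if the finitely supported $T$-invariant Borel probability measures are weak-* dense in the space $\mathcal{M}_T(X)$ of all $T$-invariant Borel probability measures on $X$. *)

theory Defs
  imports "HOL-Analysis.Analysis" "HOL-Probability.Probability"
begin

text \<open>Metrizability is automatic since the ambient type is
  a metric space; we use the Hilbert-cube type nat => real, into which every compact
  metrizable space embeds.\<close>
definition dynamical_system :: "'a::metric_space set \<Rightarrow> ('a \<Rightarrow> 'a) \<Rightarrow> bool" where
  "dynamical_system X T \<longleftrightarrow> compact X \<and> (\<exists>g. homeomorphism X X T g)"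

definition invariant_prob :: "'a::topological_space set \<Rightarrow> ('a \<Rightarrow> 'a) \<Rightarrow> 'a measure \<Rightarrow> bool" where
  "invariant_prob X T \<mu> \<longleftrightarrow>
     sets \<mu> = sets (restrict_space borel X) \<and> prob_space \<mu> \<and>
     T \<in> measurable \<mu> \<mu> \<and> distr \<mu> \<mu> T = \<mu>"

definition periodic_measure :: "'a::topological_space set \<Rightarrow> ('a \<Rightarrow> 'a) \<Rightarrow> 'a measure \<Rightarrow> bool" where
  "periodic_measure X T \<nu> \<longleftrightarrow>
     invariant_prob X T \<nu> \<and> (\<exists>S. finite S \<and> S \<subseteq> X \<and> emeasure \<nu> S = 1)"

text \<open>Weak-* density: every basic weak-* neighbourhood of every invariant measure
  (given by finitely many continuous functions and a tolerance) contains a periodic measure.\<close>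
definition dense_periodic_measures :: "'a::topological_space set \<Rightarrow> ('a \<Rightarrow> 'a) \<Rightarrow> bool" where
  "dense_periodic_measures X T \<longleftrightarrow>
     (\<forall>\<mu>. invariant_prob X T \<mu> \<longrightarrow>
        (\<forall>F \<epsilon>. finite F \<and> (\<forall>f\<in>F. continuous_on X f) \<and> \<epsilon> > (0::real) \<longrightarrow>
           (\<exists>\<nu>. periodic_measure X T \<nu> \<and>
                 (\<forall>f\<in>F. \<bar>(\<integral>x. f x \<partial>\<nu>) - (\<integral>x. f x \<partial>\<mu>)\<bar> < \<epsilon>))))"

definition prod_map :: "('a \<Rightarrow> 'a) \<Rightarrow> ('b \<Rightarrow> 'b) \<Rightarrow> 'a \<times> 'b \<Rightarrow> 'a \<times> 'b" where
  "prod_map T1 T2 = (\<lambda>(x, y). (T1 x, T2 y))"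

end

theory Submission
  imports Defs
begin


definition aa :: "nat \<Rightarrow> real" where "aa k = (1/2) ^ fact (Suc k)"
definition bet :: "nat \<Rightarrow> real" where "bet j = (\<Sum>k<j. aa k)"
definition alph :: real where "alph = (\<Sum>k. aa k)"

lemma aa_pos: "aa k > 0" by (simp add: aa_def)

lemma fact_Suc_ge: "fact (Suc k) \<ge> (Suc k :: nat)"
  by (metis fact_ge_self)

lemma aa_le_geom: "aa k \<le> (1/2) ^ Suc k"
  unfolding aa_def by (rule power_decreasing) (use fact_Suc_ge[of k] in auto)

lemma summable_aa: "summable aa"
  by (rule summable_comparison_test[where g="\<lambda>k. (1/2::real) ^ Suc k"])
     (use aa_le_geom aa_pos in \<open>auto intro!: exI[of _ 0] simp: less_imp_le\<close>)

lemma aa_Suc: "aa (Suc k) \<le> aa k / 2"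
proof -
  have "fact (Suc (Suc k)) \<ge> Suc (fact (Suc k) :: nat)"
  proof -
    have "fact (Suc (Suc k)) = (Suc (Suc k)) * (fact (Suc k) :: nat)" by simp
    also have "\<dots> \<ge> 2 * fact (Suc k)" by (intro mult_right_mono) auto
    finally show ?thesis using fact_ge_1[of "Suc k", where 'a=nat] by linarith
  qed
  hence "(1/2::real) ^ fact (Suc (Suc k)) \<le> (1/2) ^ Suc (fact (Suc k))"
    by (intro power_decreasing) auto
  thus ?thesis by (simp add: aa_def)
qed

lemma aa_shift: "aa (j + i) \<le> aa j * (1/2)^i"
proof (induction i)
  case 0 then show ?case by simp
next
  case (Suc i)
  have "aa (j + Suc i) \<le> aa (j+i) / 2" using aa_Suc[of "j+i"] by simp
  also have "\<dots> \<le> aa j * (1/2)^i / 2" using Suc by simp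
  finally show ?case by simp
qed

lemma bet_tendsto: "bet \<longlonglongrightarrow> alph"
  unfolding bet_def alph_def using summable_aa by (simp add: summable_LIMSEQ)

lemma tail_eq: "alph - bet j = (\<Sum>i. aa (i + j))"
  unfolding alph_def bet_def using suminf_split_initial_segment[OF summable_aa, of j] by simp

lemma tail_pos: "alph - bet j > 0"
proof -
  have "summable (\<lambda>i. aa (i + j))" using summable_aa by (simp add: summable_iff_shift)
  hence "(\<Sum>i. aa (i + j)) > 0" using aa_pos by (intro suminf_pos) auto
  thus ?thesis using tail_eq by simp
qed

lemma tail_le: "alph - bet j \<le> 2 * aa j"
proof -
  have s: "summable (\<lambda>i. aa (i + j))" using summable_aa by (simp add: summable_iff_shift)
  have "(\<Sum>i. aa (i + j)) \<le> (\<Sum>i. aa j * (1/2)^i)"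
    using aa_shift[of j] by (intro suminf_le s summable_mult summable_geometric) (auto simp: add.commute)
  also have "\<dots> = 2 * aa j" using suminf_geometric[of "1/2::real"] by (simp add: suminf_mult)
  finally show ?thesis using tail_eq by simp
qed

lemma bet_nonneg: "bet j \<ge> 0" unfolding bet_def using aa_pos by (simp add: sum_nonneg less_imp_le)
lemma bet_less_alph: "bet j < alph" using tail_pos[of j] by simp

lemma alph_le1: "alph \<le> 1"
proof -
  have "alph \<le> (\<Sum>k. (1/2::real) ^ Suc k)" unfolding alph_def
    using aa_le_geom by (intro suminf_le summable_aa) (auto intro: summable_mult summable_geometric)
  also have "\<dots> = 1" using suminf_divide[OF summable_geometric[of "1/2::real"], of 2] suminf_geometric[of "1/2::real"] by simp
  finally show ?thesis .
qed

lemma bet_strict_mono: "strict_mono bet"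
  by (rule strict_monoI_Suc) (simp add: bet_def aa_pos)

lemma bet_int: assumes "i \<le> j" shows "2 ^ fact j * bet i \<in> \<int>"
proof -
  have "2 ^ fact j * bet i = (\<Sum>k<i. (2::real) ^ (fact j - fact (Suc k)))"
    unfolding bet_def sum_distrib_left
  proof (rule sum.cong)
    fix k assume "k \<in> {..<i}"
    hence "fact (Suc k) \<le> (fact j :: nat)" using assms by (intro fact_mono) auto
    thus "2 ^ fact j * aa k = (2::real) ^ (fact j - fact (Suc k))"
      by (simp add: aa_def power_diff power_one_over field_simps)
  qed simp
  also have "\<dots> \<in> \<int>" by (intro Ints_sum) auto
  finally show ?thesis .
qed

lemma approx_bound: "2 ^ fact j * (alph - bet j) \<le> 2 * (1/2) ^ j"
proof -
  have "fact (Suc j) = Suc j * fact j" by simp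
  hence e: "fact (Suc j) = fact j + j * (fact j :: nat)" by simp
  have j1: "j \<le> j * (fact j :: nat)" using fact_ge_1[of j, where 'a=nat] by simp
  have "2 ^ fact j * (alph - bet j) \<le> 2 ^ fact j * (2 * aa j)"
    using tail_le[of j] by (intro mult_left_mono) auto
  also have "\<dots> = 2 * (1/2) ^ (j * fact j)" unfolding aa_def e
    by (simp add: power_add power_one_over field_simps)
  also have "\<dots> \<le> 2 * (1/2) ^ j" using j1 by (intro mult_left_mono power_decreasing) auto
  finally show ?thesis .
qed

lemma alph_irrational: assumes "K > (0::nat)" shows "real K * alph \<notin> \<int>"
proof
  assume "real K * alph \<in> \<int>"
  define j where "j = 2 * K"
  have "real K * (2 ^ fact j * (alph - bet j)) = 2 ^ fact j * (real K * alph) - real K * (2 ^ fact j * bet j)"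
    by (simp add: algebra_simps)
  also have "\<dots> \<in> \<int>"
  proof (rule Ints_diff)
    show "2 ^ fact j * (real K * alph) \<in> \<int>" by (rule Ints_mult[OF _ \<open>real K * alph \<in> \<int>\<close>]) (simp add: Ints_power)
    show "real K * (2 ^ fact j * bet j) \<in> \<int>" by (rule Ints_mult[OF Ints_of_nat bet_int[of j j]]) simp
  qed
  finally have I: "real K * (2 ^ fact j * (alph - bet j)) \<in> \<int>" .
  have P: "real K * (2 ^ fact j * (alph - bet j)) > 0" using assms tail_pos[of j] by simp
  have "real K * (2 ^ fact j * (alph - bet j)) \<le> real K * (2 * (1/2)^j)"
    using approx_bound[of j] by (intro mult_left_mono) auto
  also have "\<dots> < 1"
  proof -
    have "real (2*K) < 2 ^ (2*K)" by (metis of_nat_less_two_power of_nat_numeral of_nat_power)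
    thus ?thesis unfolding j_def by (simp add: power_one_over field_simps)
  qed
  finally have "real K * (2 ^ fact j * (alph - bet j)) < 1" .
  moreover obtain n :: int where n: "real K * (2 ^ fact j * (alph - bet j)) = of_int n"
    using I by (auto elim: Ints_cases)
  ultimately show False using P by simp
qed


definition pt :: "real \<Rightarrow> complex \<Rightarrow> (nat \<Rightarrow> real)" where
  "pt b z = (\<lambda>n. if n = 0 then b else if n = 1 then Re z else if n = 2 then Im z else 0)"

definition Tm :: "(nat \<Rightarrow> real) \<Rightarrow> (nat \<Rightarrow> real)" where
  "Tm x = pt (x 0) (Complex (x 1) (x 2) * cis (2 * pi * x 0))"

definition Ti :: "(nat \<Rightarrow> real) \<Rightarrow> (nat \<Rightarrow> real)" where
  "Ti x = pt (x 0) (Complex (x 1) (x 2) * cis (- (2 * pi * x 0)))"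

definition Bs :: "(nat \<Rightarrow> nat) \<Rightarrow> real set" where
  "Bs \<sigma> = insert alph (range (\<lambda>m. bet (\<sigma> m)))"

definition Xs :: "(nat \<Rightarrow> nat) \<Rightarrow> (nat \<Rightarrow> real) set" where
  "Xs \<sigma> = (\<lambda>p. pt (fst p) (snd p)) ` (Bs \<sigma> \<times> sphere 0 1)"

lemma pt_0[simp]: "pt b z 0 = b" and pt_1[simp]: "pt b z (Suc 0) = Re z"
  and pt_2[simp]: "pt b z 2 = Im z"
  by (auto simp: pt_def)

lemma pt_Complex[simp]: "Complex (pt b z (Suc 0)) (pt b z 2) = z"
  by (simp add: complex_eq_iff)

lemma pt_inj[simp]: "pt b z = pt b' z' \<longleftrightarrow> b = b' \<and> z = z'"
proof
  assume h: "pt b z = pt b' z'"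
  have "pt b z 0 = pt b' z' 0" "pt b z 1 = pt b' z' 1" "pt b z 2 = pt b' z' 2" using h by auto
  thus "b = b' \<and> z = z'" by (simp add: complex_eq_iff)
qed simp

lemma Tm_pt[simp]: "Tm (pt b z) = pt b (z * cis (2 * pi * b))"
  by (simp add: Tm_def)

lemma Ti_pt[simp]: "Ti (pt b z) = pt b (z * cis (- (2 * pi * b)))"
  by (simp add: Ti_def)

lemma Tm_pow_pt: "(Tm ^^ k) (pt b z) = pt b (z * cis (2 * pi * b * real k))"
proof (induction k)
  case 0 then show ?case by simp
next
  case (Suc k)
  have "cis (2 * pi * b * real k) * cis (2 * pi * b) = cis (2 * pi * b * real (Suc k))"
    by (simp add: cis_mult algebra_simps)
  then show ?case using Suc by (simp add: mult.assoc)
qed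

lemma continuous_pt: "continuous_on UNIV (\<lambda>p::real \<times> complex. pt (fst p) (snd p))"
proof (rule continuous_on_coordinatewise_then_product)
  fix i
  show "continuous_on UNIV (\<lambda>p::real \<times> complex. pt (fst p) (snd p) i)"
    unfolding pt_def by (cases "i = 0"; cases "i = 1"; cases "i = 2") (auto intro!: continuous_intros)
qed

lemma continuous_pt_comp:
  assumes "continuous_on S f" "continuous_on S g"
  shows "continuous_on S (\<lambda>x. pt (f x) (g x))"
  using continuous_on_compose[OF continuous_on_Pair[OF assms] continuous_on_subset[OF continuous_pt]]
  by (simp add: o_def)

lemma continuous_Complex12: "continuous_on S (\<lambda>x::nat\<Rightarrow>real. Complex (x 1) (x 2))"
  unfolding Complex_eq
  by (intro continuous_intros continuous_on_subset[OF continuous_on_product_coordinates]) auto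

lemma continuous_coord: "continuous_on S (\<lambda>x::nat\<Rightarrow>real. x i)"
  by (rule continuous_on_subset[OF continuous_on_product_coordinates]) auto

lemma continuous_Tm: "continuous_on S Tm"
  unfolding Tm_def
  by (intro continuous_pt_comp continuous_coord continuous_intros continuous_Complex12)

lemma continuous_Ti: "continuous_on S Ti"
  unfolding Ti_def
  by (intro continuous_pt_comp continuous_coord continuous_intros continuous_Complex12)

lemma compact_Bs: assumes "strict_mono \<sigma>" shows "compact (Bs \<sigma>)"
proof -
  have "(\<lambda>m. bet (\<sigma> m)) \<longlonglongrightarrow> alph"
    using LIMSEQ_subseq_LIMSEQ[OF bet_tendsto assms] by (simp add: o_def)
  thus ?thesis unfolding Bs_def by (rule compact_sequence_with_limit)
qed

lemma compact_Xs: assumes "strict_mono \<sigma>" shows "compact (Xs \<sigma>)"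
  unfolding Xs_def
  by (intro compact_continuous_image continuous_on_subset[OF continuous_pt] compact_Times compact_Bs assms compact_sphere) auto

lemma Xs_iff: "x \<in> Xs \<sigma> \<longleftrightarrow> (\<exists>b z. x = pt b z \<and> b \<in> Bs \<sigma> \<and> norm z = 1)"
  unfolding Xs_def by force

lemma Tm_Xs: "x \<in> Xs \<sigma> \<Longrightarrow> Tm x \<in> Xs \<sigma>"
  by (auto simp: Xs_iff norm_mult)

lemma Ti_Xs: "x \<in> Xs \<sigma> \<Longrightarrow> Ti x \<in> Xs \<sigma>"
  by (auto simp: Xs_iff norm_mult)

lemma Ti_Tm: "x \<in> Xs \<sigma> \<Longrightarrow> Ti (Tm x) = x"
  by (auto simp: Xs_iff mult.assoc cis_mult)

lemma Tm_Ti: "x \<in> Xs \<sigma> \<Longrightarrow> Tm (Ti x) = x"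
  by (auto simp: Xs_iff mult.assoc cis_mult)

lemma homeo_Xs: "homeomorphism (Xs \<sigma>) (Xs \<sigma>) Tm Ti"
  unfolding homeomorphism_def
proof (intro conjI ballI continuous_Tm continuous_Ti)
  show "Tm ` Xs \<sigma> = Xs \<sigma>"
    using Tm_Xs Ti_Xs Tm_Ti by (force simp: image_iff)
  show "Ti ` Xs \<sigma> = Xs \<sigma>"
    using Tm_Xs Ti_Xs Ti_Tm by (force simp: image_iff)
qed (auto simp: Ti_Tm Tm_Ti)

lemma dyn_Xs: assumes "strict_mono \<sigma>" shows "dynamical_system (Xs \<sigma>) Tm"
  unfolding dynamical_system_def using compact_Xs[OF assms] homeo_Xs by blast


lemma inv_integral_iter:
  fixes f :: "'a \<Rightarrow> real"
  assumes Tm: "T \<in> measurable \<mu> \<mu>" and D: "distr \<mu> \<mu> T = \<mu>" and fm: "f \<in> borel_measurable \<mu>"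
  shows "(\<integral>x. f ((T ^^ k) x) \<partial>\<mu>) = (\<integral>x. f x \<partial>\<mu>)"
proof (induction k)
  case 0 then show ?case by simp
next
  case (Suc k)
  have Tk: "(T ^^ k) \<in> measurable \<mu> \<mu>"
    by (induction k) (auto intro: measurable_compose[OF _ Tm] simp: measurable_ident_sets)
  have fk: "(\<lambda>x. f ((T ^^ k) x)) \<in> borel_measurable \<mu>"
    using measurable_comp[OF Tk fm] by (simp add: o_def)
  have "(\<integral>x. f ((T ^^ Suc k) x) \<partial>\<mu>) = (\<integral>x. f ((T ^^ k) (T x)) \<partial>\<mu>)"
    by (simp add: funpow_Suc_right del: funpow.simps)
  also have "\<dots> = (\<integral>x. f ((T ^^ k) x) \<partial>distr \<mu> \<mu> T)"
    by (rule integral_distr[OF Tm fk, symmetric])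
  also have "\<dots> = (\<integral>x. f x \<partial>\<mu>)" using D Suc by simp
  finally show ?case .
qed

lemma dense_from_approx:
  fixes X :: "'a::metric_space set" and T :: "'a \<Rightarrow> 'a"
  assumes cX: "compact X" and Tc: "continuous_on X T" and TX: "\<And>x. x \<in> X \<Longrightarrow> T x \<in> X"
  and approx: "\<And>F \<epsilon>. finite F \<Longrightarrow> (\<forall>f\<in>F. continuous_on X (f :: 'a \<Rightarrow> real)) \<Longrightarrow> \<epsilon> > 0 \<Longrightarrow>
     \<exists>\<pi> L. L > 0 \<and> \<pi> \<in> measurable (restrict_space borel X) (restrict_space borel X) \<and> finite (\<pi> ` X) \<and>
       (\<forall>x\<in>X. (T ^^ L) (\<pi> x) = \<pi> x) \<and>
       (\<forall>x\<in>X. \<forall>k<L. \<forall>f\<in>F. \<bar>f ((T ^^ k) (\<pi> x)) - f ((T ^^ k) x)\<bar> \<le> \<epsilon> / 2)"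
  shows "dense_periodic_measures X T"
  unfolding dense_periodic_measures_def
proof (intro allI impI)
  fix \<mu> :: "'a measure" and F :: "('a \<Rightarrow> real) set" and \<epsilon> :: real
  assume inv: "invariant_prob X T \<mu>" and H: "finite F \<and> (\<forall>f\<in>F. continuous_on X f) \<and> \<epsilon> > 0"
  define M where "M = restrict_space borel X"
  have Xb: "X \<in> sets borel" using cX by (simp add: compact_imp_closed borel_closed)
  have spM: "space M = X" by (simp add: M_def space_restrict_space)
  have setsmu: "sets \<mu> = sets M" and pmu: "prob_space \<mu>" and Tmu: "T \<in> measurable \<mu> \<mu>"
    and Dmu: "distr \<mu> \<mu> T = \<mu>"
    using inv by (auto simp: invariant_prob_def M_def)
  interpret mu: prob_space \<mu> by (rule pmu)
  have spmu: "space \<mu> = X" using sets_eq_imp_space_eq[OF setsmu] spM by simp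
  have TM: "T \<in> measurable M M" unfolding M_def
    by (rule measurable_restrict_space2) (use TX borel_measurable_continuous_on_restrict[OF Tc] in \<open>auto simp: space_restrict_space\<close>)
  have TkM: "(T ^^ k) \<in> measurable M M" for k
    by (induction k) (auto intro: measurable_compose[OF _ TM])
  have TkX: "x \<in> X \<Longrightarrow> (T ^^ k) x \<in> X" for x k
    by (induction k) (auto intro: TX)
  obtain \<pi> L where L0: "L > 0" and \<pi>M: "\<pi> \<in> measurable M M" and fin: "finite (\<pi> ` X)"
    and per: "\<forall>x\<in>X. (T ^^ L) (\<pi> x) = \<pi> x"
    and close: "\<forall>x\<in>X. \<forall>k<L. \<forall>f\<in>F. \<bar>f ((T ^^ k) (\<pi> x)) - f ((T ^^ k) x)\<bar> \<le> \<epsilon> / 2"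
    using approx[of F \<epsilon>] H unfolding M_def by blast
  have \<pi>X: "x \<in> X \<Longrightarrow> \<pi> x \<in> X" for x using measurable_space[OF \<pi>M] spM by auto
  define U where "U = uniform_count_measure {..<L}"
  interpret U: prob_space U unfolding U_def by (rule prob_space_uniform_count_measure) (use L0 in auto)
  interpret P: pair_prob_space U \<mu> by unfold_locales
  have setsU: "sets U = sets (count_space {..<L})" unfolding U_def by (rule sets_uniform_count_measure_count_space)
  have spU: "space U = {..<L}" using sets_eq_imp_space_eq[OF setsU] by simp
  have spP: "space (U \<Otimes>\<^sub>M \<mu>) = {..<L} \<times> X" by (simp add: space_pair_measure spU spmu)
  define \<Phi> where "\<Phi> = (\<lambda>(k, x). (T ^^ k) (\<pi> x))"
  have \<pi>mu: "\<pi> \<in> measurable \<mu> M" using \<pi>M by (simp add: measurable_cong_sets[OF setsmu refl])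
  have \<Phi>m: "\<Phi> \<in> measurable (U \<Otimes>\<^sub>M \<mu>) M"
  proof -
    have "\<Phi> \<in> measurable (count_space {..<L} \<Otimes>\<^sub>M \<mu>) M"
      unfolding \<Phi>_def
      by (rule measurable_pair_measure_countable1) (auto intro: measurable_comp[OF \<pi>mu TkM, unfolded o_def])
    thus ?thesis by (simp add: measurable_cong_sets[OF sets_pair_measure_cong[OF setsU refl] refl])
  qed
  define \<nu> where "\<nu> = distr (U \<Otimes>\<^sub>M \<mu>) M \<Phi>"
  have setsnu: "sets \<nu> = sets M" by (simp add: \<nu>_def)
  have pnu: "prob_space \<nu>" unfolding \<nu>_def by (rule P.prob_space_distr[OF \<Phi>m])
  have Tnu: "T \<in> measurable \<nu> \<nu>" using TM by (simp add: measurable_cong_sets[OF setsnu setsnu])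
  define s where "s = (\<lambda>k. Suc k mod L)"
  define \<psi> where "\<psi> = (\<lambda>(k::nat, x::'a). (s k, x))"
  have s_lt: "s k < L" for k using L0 by (simp add: s_def)
  have s_inj: "inj_on s {..<L}"
  proof (rule inj_onI)
    fix a b assume "a \<in> {..<L}" "b \<in> {..<L}" "s a = s b"
    thus "a = b" unfolding s_def
      by (metis lessThan_iff Suc_lessI mod_less mod_self nat.inject Zero_not_Suc)
  qed
  have s_card: "card (s -` A \<inter> {..<L}) = card A" if "A \<subseteq> {..<L}" for A
  proof -
    have "bij_betw s (s -` A \<inter> {..<L}) A"
      unfolding bij_betw_def
    proof
      show "inj_on s (s -` A \<inter> {..<L})" using s_inj by (rule inj_on_subset) auto
      show "s ` (s -` A \<inter> {..<L}) = A"
      proof (intro equalityI subsetI)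
        fix a assume a: "a \<in> A"
        hence aL: "a < L" using that by auto
        define b where "b = (if a = 0 then L - 1 else a - 1)"
        have "b < L" "s b = a" using aL L0 by (auto simp: b_def s_def)
        thus "a \<in> s ` (s -` A \<inter> {..<L})" using a by force
      qed auto
    qed
    thus ?thesis by (rule bij_betw_same_card)
  qed
  have \<psi>m: "\<psi> \<in> measurable (U \<Otimes>\<^sub>M \<mu>) (U \<Otimes>\<^sub>M \<mu>)"
  proof -
    have "s \<in> measurable U U"
      by (simp add: measurable_cong_sets[OF setsU setsU] s_lt)
    hence "(\<lambda>p. s (fst p)) \<in> measurable (U \<Otimes>\<^sub>M \<mu>) U" by (rule measurable_compose[OF measurable_fst])
    thus ?thesis unfolding \<psi>_def by (auto intro!: measurable_Pair simp: split_beta)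
  qed
  have D\<psi>: "distr (U \<Otimes>\<^sub>M \<mu>) (U \<Otimes>\<^sub>M \<mu>) \<psi> = U \<Otimes>\<^sub>M \<mu>"
  proof (rule pair_measure_eqI[symmetric])
    show "sigma_finite_measure U" "sigma_finite_measure \<mu>" by unfold_locales
    show "sets (U \<Otimes>\<^sub>M \<mu>) = sets (distr (U \<Otimes>\<^sub>M \<mu>) (U \<Otimes>\<^sub>M \<mu>) \<psi>)" by simp
    fix A B assume A: "A \<in> sets U" and B: "B \<in> sets \<mu>"
    have AL: "A \<subseteq> {..<L}" using A setsU by simp
    have BX: "B \<subseteq> X" using sets.sets_into_space[OF B] spmu by simp
    have "\<psi> -` (A \<times> B) \<inter> space (U \<Otimes>\<^sub>M \<mu>) = (s -` A \<inter> {..<L}) \<times> B"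
      using BX by (auto simp: \<psi>_def spP)
    moreover have "(s -` A \<inter> {..<L}) \<in> sets U" using setsU by auto
    ultimately have "emeasure (distr (U \<Otimes>\<^sub>M \<mu>) (U \<Otimes>\<^sub>M \<mu>) \<psi>) (A \<times> B) = emeasure U (s -` A \<inter> {..<L}) * emeasure \<mu> B"
      using A B by (simp add: emeasure_distr[OF \<psi>m] mu.emeasure_pair_measure_Times)
    also have "emeasure U (s -` A \<inter> {..<L}) = emeasure U A"
      unfolding U_def using AL by (simp add: emeasure_uniform_count_measure s_card)
    finally show "emeasure U A * emeasure \<mu> B = emeasure (distr (U \<Otimes>\<^sub>M \<mu>) (U \<Otimes>\<^sub>M \<mu>) \<psi>) (A \<times> B)" by simp
  qed
  have Dnu: "distr \<nu> \<nu> T = \<nu>"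
  proof -
    have "distr \<nu> \<nu> T = distr \<nu> M T" by (rule distr_cong) (auto simp: setsnu)
    also have "\<dots> = distr (U \<Otimes>\<^sub>M \<mu>) M (T \<circ> \<Phi>)" unfolding \<nu>_def by (rule distr_distr[OF TM \<Phi>m])
    also have "\<dots> = distr (U \<Otimes>\<^sub>M \<mu>) M (\<Phi> \<circ> \<psi>)"
    proof (rule distr_cong)
      fix p assume "p \<in> space (U \<Otimes>\<^sub>M \<mu>)"
      then obtain k x where p: "p = (k, x)" "k < L" "x \<in> X" using spP by auto
      have "T ((T ^^ k) (\<pi> x)) = (T ^^ s k) (\<pi> x)"
      proof (cases "Suc k = L")
        case True
        have "T ((T ^^ k) (\<pi> x)) = (T ^^ L) (\<pi> x)" using True[symmetric] by simp
        also have "\<dots> = \<pi> x" using per p(3) by simp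
        finally show ?thesis using True by (simp add: s_def)
      next
        case False
        then show ?thesis using p(2) by (simp add: s_def)
      qed
      thus "(T \<circ> \<Phi>) p = (\<Phi> \<circ> \<psi>) p" by (simp add: p \<Phi>_def \<psi>_def)
    qed auto
    also have "\<dots> = distr (distr (U \<Otimes>\<^sub>M \<mu>) (U \<Otimes>\<^sub>M \<mu>) \<psi>) M \<Phi>" by (rule distr_distr[OF \<Phi>m \<psi>m, symmetric])
    also have "\<dots> = \<nu>" by (simp add: D\<psi> \<nu>_def)
    finally show ?thesis .
  qed
  define S where "S = \<Phi> ` ({..<L} \<times> X)"
  have SX: "S \<subseteq> X" unfolding S_def \<Phi>_def using TkX \<pi>X by auto
  have Sfin: "finite S"
  proof -
    have "S \<subseteq> (\<Union>k<L. (T ^^ k) ` (\<pi> ` X))" unfolding S_def \<Phi>_def by auto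
    moreover have "finite (\<Union>k<L. (T ^^ k) ` (\<pi> ` X))" using fin by auto
    ultimately show ?thesis by (rule finite_subset)
  qed
  have Ssets: "S \<in> sets M"
    unfolding M_def using SX Sfin Xb
    by (subst sets_restrict_space_iff) (auto intro: borel_closed finite_imp_closed)
  have "emeasure \<nu> S = emeasure (U \<Otimes>\<^sub>M \<mu>) (\<Phi> -` S \<inter> space (U \<Otimes>\<^sub>M \<mu>))"
    unfolding \<nu>_def by (rule emeasure_distr[OF \<Phi>m Ssets])
  also have "\<Phi> -` S \<inter> space (U \<Otimes>\<^sub>M \<mu>) = space (U \<Otimes>\<^sub>M \<mu>)" unfolding spP S_def by auto
  also have "emeasure (U \<Otimes>\<^sub>M \<mu>) (space (U \<Otimes>\<^sub>M \<mu>)) = 1" by (rule P.emeasure_space_1)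
  finally have nuS: "emeasure \<nu> S = 1" .
  have per_nu: "periodic_measure X T \<nu>"
    unfolding periodic_measure_def invariant_prob_def
    using setsnu pnu Tnu Dnu Sfin SX nuS by (auto simp: M_def)
  have int_close: "\<bar>(\<integral>x. f x \<partial>\<nu>) - (\<integral>x. f x \<partial>\<mu>)\<bar> < \<epsilon>" if fF: "f \<in> F" for f
  proof -
    have fc: "continuous_on X f" using H fF by auto
    obtain B where B: "\<And>x. x \<in> X \<Longrightarrow> \<bar>f x\<bar> \<le> B"
      using compact_imp_bounded[OF compact_continuous_image[OF fc cX]] unfolding bounded_iff by auto
    have fM: "f \<in> borel_measurable M" unfolding M_def by (rule borel_measurable_continuous_on_restrict[OF fc])
    have fmu: "f \<in> borel_measurable \<mu>" using fM by (simp add: measurable_cong_sets[OF setsmu refl])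
    have Tkmu: "(T ^^ k) \<in> measurable \<mu> M" for k using TkM[of k] by (simp add: measurable_cong_sets[OF setsmu refl])
    have g1m: "(\<lambda>x. f ((T ^^ k) (\<pi> x))) \<in> borel_measurable \<mu>" for k
      using measurable_comp[OF measurable_comp[OF \<pi>mu TkM] fM] by (simp add: o_def)
    have g2m: "(\<lambda>x. f ((T ^^ k) x)) \<in> borel_measurable \<mu>" for k
      using measurable_comp[OF Tkmu fM] by (simp add: o_def)
    have g1i: "integrable \<mu> (\<lambda>x. f ((T ^^ k) (\<pi> x)))" for k
      by (rule mu.integrable_const_bound[where B=B]) (auto simp: spmu B TkX \<pi>X g1m)
    have g2i: "integrable \<mu> (\<lambda>x. f ((T ^^ k) x))" for k
      by (rule mu.integrable_const_bound[where B=B]) (auto simp: spmu B TkX g2m)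
    have fPm: "(\<lambda>p. f (\<Phi> p)) \<in> borel_measurable (U \<Otimes>\<^sub>M \<mu>)"
      using measurable_comp[OF \<Phi>m fM] by (simp add: o_def)
    have fPi: "integrable (U \<Otimes>\<^sub>M \<mu>) (\<lambda>p. f (\<Phi> p))"
    proof (rule P.integrable_const_bound[where B=B, OF AE_I2 fPm])
      fix p assume "p \<in> space (U \<Otimes>\<^sub>M \<mu>)"
      then obtain k x where "p = (k, x)" "x \<in> X" using spP by auto
      thus "norm (f (\<Phi> p)) \<le> B" using B TkX \<pi>X by (simp add: \<Phi>_def)
    qed
    have "(\<integral>x. f x \<partial>\<nu>) = (\<integral>p. f (\<Phi> p) \<partial>(U \<Otimes>\<^sub>M \<mu>))"
      unfolding \<nu>_def by (rule integral_distr[OF \<Phi>m fM])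
    also have "\<dots> = (\<integral>k. (\<integral>x. f (\<Phi> (k, x)) \<partial>\<mu>) \<partial>U)"
      by (rule P.integral_fst'[OF fPi, symmetric])
    also have "\<dots> = (\<Sum>k<L. (\<integral>x. f ((T ^^ k) (\<pi> x)) \<partial>\<mu>)) / real L"
      unfolding U_def by (simp add: integral_uniform_count_measure \<Phi>_def)
    finally have e1: "(\<integral>x. f x \<partial>\<nu>) = (\<Sum>k<L. (\<integral>x. f ((T ^^ k) (\<pi> x)) \<partial>\<mu>)) / real L" .
    have "(\<Sum>k<L. (\<integral>x. f ((T ^^ k) x) \<partial>\<mu>)) = (\<Sum>k<L. (\<integral>x. f x \<partial>\<mu>))"
      using inv_integral_iter[OF Tmu Dmu fmu] by simp
    hence e2: "(\<integral>x. f x \<partial>\<mu>) = (\<Sum>k<L. (\<integral>x. f ((T ^^ k) x) \<partial>\<mu>)) / real L"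
      using L0 by simp
    have dk: "\<bar>(\<integral>x. f ((T ^^ k) (\<pi> x)) \<partial>\<mu>) - (\<integral>x. f ((T ^^ k) x) \<partial>\<mu>)\<bar> \<le> \<epsilon> / 2" if "k < L" for k
    proof -
      have eq: "(\<integral>x. f ((T ^^ k) (\<pi> x)) \<partial>\<mu>) - (\<integral>x. f ((T ^^ k) x) \<partial>\<mu>)
          = (\<integral>x. f ((T ^^ k) (\<pi> x)) - f ((T ^^ k) x) \<partial>\<mu>)"
        by (rule Bochner_Integration.integral_diff[OF g1i g2i, symmetric])
      have bd: "x \<in> space \<mu> \<Longrightarrow> \<bar>f ((T ^^ k) (\<pi> x)) - f ((T ^^ k) x)\<bar> \<le> \<epsilon> / 2" for x
        using close that fF spmu by auto
      have "(\<integral>x. f ((T ^^ k) (\<pi> x)) - f ((T ^^ k) x) \<partial>\<mu>) \<le> \<epsilon> / 2"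
        by (rule mu.integral_le_const[OF Bochner_Integration.integrable_diff[OF g1i g2i] AE_I2])
           (rule order_trans[OF abs_ge_self bd])
      moreover have "- (\<epsilon> / 2) \<le> (\<integral>x. f ((T ^^ k) (\<pi> x)) - f ((T ^^ k) x) \<partial>\<mu>)"
      proof (rule mu.integral_ge_const[OF Bochner_Integration.integrable_diff[OF g1i g2i] AE_I2])
        fix x assume "x \<in> space \<mu>"
        from bd[OF this] show "- (\<epsilon> / 2) \<le> f ((T ^^ k) (\<pi> x)) - f ((T ^^ k) x)" by linarith
      qed
      ultimately show ?thesis unfolding eq by linarith
    qed
    have "\<bar>(\<integral>x. f x \<partial>\<nu>) - (\<integral>x. f x \<partial>\<mu>)\<bar>
        = \<bar>(\<Sum>k<L. (\<integral>x. f ((T ^^ k) (\<pi> x)) \<partial>\<mu>) - (\<integral>x. f ((T ^^ k) x) \<partial>\<mu>))\<bar> / real L"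
      unfolding e1 e2 by (simp add: sum_subtractf diff_divide_distrib[symmetric])
    also have "\<dots> \<le> (\<Sum>k<L. \<bar>(\<integral>x. f ((T ^^ k) (\<pi> x)) \<partial>\<mu>) - (\<integral>x. f ((T ^^ k) x) \<partial>\<mu>)\<bar>) / real L"
      by (intro divide_right_mono sum_abs) auto
    also have "\<dots> \<le> (\<Sum>k<L. \<epsilon> / 2) / real L"
      by (intro divide_right_mono sum_mono dk) auto
    also have "\<dots> = \<epsilon> / 2" using L0 by simp
    also have "\<dots> < \<epsilon>" using H by simp
    finally show ?thesis .
  qed
  show "\<exists>\<nu>. periodic_measure X T \<nu> \<and> (\<forall>f\<in>F. \<bar>(\<integral>x. f x \<partial>\<nu>) - (\<integral>x. f x \<partial>\<mu>)\<bar> < \<epsilon>)"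
    using per_nu int_close by blast
qed


lemma cis_minus_1: "cmod (cis t - 1) \<le> \<bar>t\<bar>"
proof -
  have "(cmod (cis t - 1))\<^sup>2 = (cos t - 1)\<^sup>2 + (sin t)\<^sup>2" by (simp add: cmod_power2)
  also have "\<dots> = 2 - 2 * cos t" by (simp add: power2_eq_square algebra_simps sin_squared_eq)
  also have "\<dots> = 4 * (sin (t/2))\<^sup>2" using cos_double_sin[of "t/2"] by simp
  also have "\<dots> \<le> 4 * (t/2)\<^sup>2"
  proof -
    have "(sin (t/2))\<^sup>2 \<le> (t/2)\<^sup>2" using abs_sin_x_le_abs_x[of "t/2"] abs_le_square_iff by blast
    thus ?thesis by simp
  qed
  also have "\<dots> = t\<^sup>2" by (simp add: power2_eq_square)
  finally have "(cmod (cis t - 1))\<^sup>2 \<le> \<bar>t\<bar>\<^sup>2" by simp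
  thus ?thesis by (rule power2_le_imp_le) simp
qed

lemma cis_lip: "cmod (cis a - cis b) \<le> \<bar>a - b\<bar>"
proof -
  have "cis a - cis b = cis b * (cis (a - b) - 1)" by (simp add: algebra_simps cis_mult)
  hence "cmod (cis a - cis b) = cmod (cis (a - b) - 1)" by (simp add: norm_mult)
  thus ?thesis using cis_minus_1 by simp
qed

definition qz :: "nat \<Rightarrow> complex \<Rightarrow> complex" where
  "qz Q z = sgn (Complex (of_int \<lfloor>real Q * Re z\<rfloor> / real Q) (of_int \<lfloor>real Q * Im z\<rfloor> / real Q))"

lemma floor_div_close: assumes "Q > (0::nat)" shows "\<bar>of_int \<lfloor>real Q * x\<rfloor> / real Q - x\<bar> \<le> 1 / real Q"
proof -
  have h: "\<bar>of_int \<lfloor>real Q * x\<rfloor> - real Q * x\<bar> \<le> 1" by linarith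
  have "of_int \<lfloor>real Q * x\<rfloor> / real Q - x = (of_int \<lfloor>real Q * x\<rfloor> - real Q * x) / real Q"
    using assms by (simp add: field_simps)
  hence "\<bar>of_int \<lfloor>real Q * x\<rfloor> / real Q - x\<bar> = \<bar>of_int \<lfloor>real Q * x\<rfloor> - real Q * x\<bar> / real Q"
    by simp
  also have "\<dots> \<le> 1 / real Q" using h by (intro divide_right_mono) auto
  finally show ?thesis .
qed

lemma qz_close:
  assumes Q: "Q \<ge> (3::nat)" and z: "cmod z = 1"
  shows "cmod (qz Q z) = 1" "cmod (qz Q z - z) \<le> 4 / real Q"
proof -
  define w where "w = Complex (of_int \<lfloor>real Q * Re z\<rfloor> / real Q) (of_int \<lfloor>real Q * Im z\<rfloor> / real Q)"
  have Q0: "Q > 0" using Q by simp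
  have "cmod (w - z) \<le> \<bar>Re (w - z)\<bar> + \<bar>Im (w - z)\<bar>" by (rule cmod_le)
  also have "\<dots> \<le> 1 / real Q + 1 / real Q"
    using floor_div_close[OF Q0, of "Re z"] floor_div_close[OF Q0, of "Im z"] by (simp add: w_def)
  finally have wz: "cmod (w - z) \<le> 2 / real Q" by simp
  have "\<bar>cmod w - cmod z\<bar> \<le> cmod (w - z)" by (rule norm_triangle_ineq3)
  hence w1: "\<bar>cmod w - 1\<bar> \<le> 2 / real Q" using wz z by simp
  have "2 / real Q < 1" using Q by (simp add: field_simps)
  hence wpos: "cmod w > 0" using w1 by linarith
  hence w0: "w \<noteq> 0" by auto
  show "cmod (qz Q z) = 1" unfolding qz_def w_def[symmetric] using w0 by (simp add: norm_sgn)
  have "sgn w - w = (1 / cmod w - 1) *\<^sub>R w" by (simp add: sgn_div_norm algebra_simps scaleR_conv_of_real divide_inverse)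
  hence "cmod (sgn w - w) = \<bar>1 / cmod w - 1\<bar> * cmod w" by simp
  also have "\<dots> = \<bar>1 - cmod w\<bar>" using wpos by (simp add: abs_mult_pos' field_simps abs_minus_commute)
  finally have sw: "cmod (sgn w - w) \<le> 2 / real Q" using w1 by (simp add: abs_minus_commute)
  have "cmod (sgn w - z) \<le> cmod (sgn w - w) + cmod (w - z)" by (rule norm_diff_triangle_le[of _ w]) simp_all
  also have "\<dots> \<le> 4 / real Q" using sw wz by simp
  finally show "cmod (qz Q z - z) \<le> 4 / real Q" unfolding qz_def w_def[symmetric] .
qed

lemma qz_fin: "finite (qz Q ` sphere 0 1)"
proof -
  let ?G = "(\<lambda>(i::int, j::int). sgn (Complex (of_int i / real Q) (of_int j / real Q))) ` ({- int Q..int Q} \<times> {- int Q..int Q})"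
  have bnd: "\<lfloor>real Q * y\<rfloor> \<in> {- int Q..int Q}" if "\<bar>y\<bar> \<le> 1" for y
  proof -
    have "real Q * y \<le> real Q * 1" using that by (intro mult_left_mono) auto
    moreover have "real Q * (-1) \<le> real Q * y" using that by (intro mult_left_mono) auto
    ultimately have "- real Q \<le> real Q * y" "real Q * y \<le> real Q" by simp_all
    hence "- int Q \<le> \<lfloor>real Q * y\<rfloor>" "\<lfloor>real Q * y\<rfloor> \<le> int Q"
      by (simp_all add: le_floor_iff floor_le_iff)
    thus ?thesis by simp
  qed
  have "qz Q ` sphere 0 1 \<subseteq> ?G"
  proof
    fix w assume "w \<in> qz Q ` sphere 0 1"
    then obtain z where z: "cmod z = 1" "w = qz Q z" by auto
    have "\<bar>Re z\<bar> \<le> 1" "\<bar>Im z\<bar> \<le> 1" using abs_Re_le_cmod[of z] abs_Im_le_cmod[of z] z by auto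
    thus "w \<in> ?G" using bnd z unfolding qz_def by force
  qed
  moreover have "finite ?G" by simp
  ultimately show ?thesis by (rule finite_subset)
qed

lemma coord_meas[measurable]: "(\<lambda>x::nat\<Rightarrow>real. x i) \<in> borel_measurable borel"
  by (rule borel_measurable_continuous_onI) simp

lemma qz_meas[measurable]: "qz Q \<in> borel_measurable borel"
  unfolding qz_def Complex_eq by measurable

lemma pt_meas: "(\<lambda>p::real \<times> complex. pt (fst p) (snd p)) \<in> borel_measurable borel"
  by (rule borel_measurable_continuous_onI[OF continuous_pt])

lemma finite_delta:
  assumes "finite F" "\<And>f. f \<in> F \<Longrightarrow> \<exists>d>0. \<forall>p\<in>K. \<forall>q\<in>K. dist p q < d \<longrightarrow> P f p q"
  shows "\<exists>d>0. \<forall>f\<in>F. \<forall>p\<in>K. \<forall>q\<in>K. dist p q < d \<longrightarrow> P f p q"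
  using assms
proof (induction F rule: finite_induct)
  case empty then show ?case by (intro exI[of _ 1]) auto
next
  case (insert g F)
  obtain d1 where d1: "d1 > 0" "\<forall>f\<in>F. \<forall>p\<in>K. \<forall>q\<in>K. dist p q < d1 \<longrightarrow> P f p q"
    using insert by blast
  obtain d2 where d2: "d2 > 0" "\<forall>p\<in>K. \<forall>q\<in>K. dist p q < d2 \<longrightarrow> P g p q"
    using insert by blast
  show ?case using d1 d2 by (intro exI[of _ "min d1 d2"]) auto
qed

lemma dist_pair_le: "dist (a::real, w::complex) (b, v) \<le> \<bar>a - b\<bar> + cmod (w - v)"
  unfolding dist_Pair_Pair dist_real_def dist_complex_def
  using sqrt_sum_squares_le_sum_abs[of "a - b" "cmod (w - v)"] by simp

lemma dense_Xs:
  assumes sm: "strict_mono \<sigma>"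
  shows "dense_periodic_measures (Xs \<sigma>) Tm"
proof (rule dense_from_approx[OF compact_Xs[OF sm] continuous_Tm Tm_Xs])
  fix F :: "((nat \<Rightarrow> real) \<Rightarrow> real) set" and \<epsilon> :: real
  assume F: "finite F" and Fc: "\<forall>f\<in>F. continuous_on (Xs \<sigma>) f" and \<epsilon>: "\<epsilon> > 0"
  define K where "K = Bs \<sigma> \<times> sphere (0::complex) 1"
  define ptc where "ptc = (\<lambda>p::real \<times> complex. pt (fst p) (snd p))"
  have XK: "Xs \<sigma> = ptc ` K" unfolding Xs_def K_def ptc_def ..
  have cK: "compact K" unfolding K_def by (intro compact_Times compact_Bs sm compact_sphere)
  have "\<exists>d>0. \<forall>f\<in>F. \<forall>p\<in>K. \<forall>q\<in>K. dist p q < d \<longrightarrow> \<bar>f (ptc p) - f (ptc q)\<bar> < \<epsilon> / 2"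
  proof (rule finite_delta[OF F])
    fix f assume "f \<in> F"
    hence fc: "continuous_on (ptc ` K) f" using Fc XK by simp
    have "continuous_on K (f \<circ> ptc)"
      by (rule continuous_on_compose[OF continuous_on_subset[OF continuous_pt[folded ptc_def]] fc]) auto
    hence "uniformly_continuous_on K (f \<circ> ptc)" using cK by (rule compact_uniformly_continuous)
    then obtain d where "d > 0" "\<forall>q\<in>K. \<forall>p\<in>K. dist p q < d \<longrightarrow> dist ((f \<circ> ptc) p) ((f \<circ> ptc) q) < \<epsilon> / 2"
      unfolding uniformly_continuous_on_def using \<epsilon> by (metis half_gt_zero)
    thus "\<exists>d>0. \<forall>p\<in>K. \<forall>q\<in>K. dist p q < d \<longrightarrow> \<bar>f (ptc p) - f (ptc q)\<bar> < \<epsilon> / 2"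
      by (auto simp: dist_real_def)
  qed
  then obtain \<delta> where \<delta>: "\<delta> > 0" "\<forall>f\<in>F. \<forall>p\<in>K. \<forall>q\<in>K. dist p q < \<delta> \<longrightarrow> \<bar>f (ptc p) - f (ptc q)\<bar> < \<epsilon> / 2"
    by blast
  define Q :: nat where "Q = nat \<lceil>8 / \<delta>\<rceil> + 3"
  have Q3: "Q \<ge> 3" by (simp add: Q_def)
  have Qd: "4 / real Q < \<delta> / 2"
  proof -
    have "8 / \<delta> < real Q" unfolding Q_def by linarith
    thus ?thesis using \<delta>(1) Q3 by (simp add: field_simps)
  qed
  obtain N where N: "(1/2::real) ^ N < \<delta> / 64" using real_arch_pow_inv[of "\<delta> / 64" "1/2::real"] \<delta>(1) by auto
  define j where "j = \<sigma> N"
  define L :: nat where "L = 2 ^ fact j"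
  define c where "c = bet j"
  define Fin where "Fin = (\<lambda>m. bet (\<sigma> m)) ` {..<N}"
  define bq where "bq = (\<lambda>b. if b \<in> Fin then b else c)"
  define \<pi> where "\<pi> = (\<lambda>x::nat\<Rightarrow>real. pt (bq (x 0)) (qz Q (Complex (x 1) (x 2))))"
  have jN: "N \<le> j" unfolding j_def using sm by (rule seq_suble)
  have L0: "L > 0" by (simp add: L_def)
  have cB: "c \<in> Bs \<sigma>" unfolding c_def j_def Bs_def by auto
  have FinB: "Fin \<subseteq> Bs \<sigma>" unfolding Fin_def Bs_def by auto
  have bqB: "bq b \<in> Bs \<sigma>" for b using cB FinB by (auto simp: bq_def)
  have bq_bet: "\<exists>i\<le>j. bq b = bet i" for b
  proof (cases "b \<in> Fin")
    case True
    then obtain m where "m < N" "b = bet (\<sigma> m)" by (auto simp: Fin_def)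
    moreover have "\<sigma> m \<le> j" unfolding j_def using sm \<open>m < N\<close> by (simp add: strict_mono_less_eq)
    ultimately show ?thesis using True by (auto simp: bq_def)
  next
    case False then show ?thesis by (auto simp: bq_def c_def)
  qed
  have Fin_fin: "finite Fin" by (simp add: Fin_def)
  have tail: "(1 + 2 * pi * real L) * (alph - c) < \<delta> / 2"
  proof -
    have a0: "alph - c \<ge> 0" using bet_less_alph[of j] by (simp add: c_def)
    have L1: "1 \<le> real L" using L0 by simp
    have Lb: "real L * (alph - c) \<le> 2 * (1/2)^j" using approx_bound[of j] by (simp add: L_def c_def)
    have "alph - c \<le> real L * (alph - c)" using a0 L1 by (simp add: mult_le_cancel_right1)
    hence "(1 + 2 * pi * real L) * (alph - c) \<le> (1 + 2 * pi) * (real L * (alph - c))"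
      by (simp add: algebra_simps)
    also have "\<dots> \<le> (1 + 2 * pi) * (2 * (1/2)^j)" using Lb by (intro mult_left_mono) auto
    also have "\<dots> \<le> 9 * (2 * (1/2)^j)" using pi_less_4 by (intro mult_right_mono) auto
    also have "\<dots> \<le> 18 * (1/2)^N" using jN by (simp add: power_decreasing)
    also have "\<dots> < \<delta> / 2" using N \<delta>(1) zero_le_power[of "1/2::real" N] by linarith
    finally show ?thesis .
  qed
  have \<pi>X: "\<pi> x \<in> Xs \<sigma>" if xX: "x \<in> Xs \<sigma>" for x
  proof -
    obtain b z where "x = pt b z" "norm z = 1" using xX by (auto simp: Xs_iff)
    thus ?thesis unfolding \<pi>_def Xs_iff using bqB qz_close(1)[OF Q3] by auto
  qed
  show "\<exists>\<pi> L. L > 0 \<and> \<pi> \<in> measurable (restrict_space borel (Xs \<sigma>)) (restrict_space borel (Xs \<sigma>)) \<and>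
       finite (\<pi> ` Xs \<sigma>) \<and> (\<forall>x\<in>Xs \<sigma>. (Tm ^^ L) (\<pi> x) = \<pi> x) \<and>
       (\<forall>x\<in>Xs \<sigma>. \<forall>k<L. \<forall>f\<in>F. \<bar>f ((Tm ^^ k) (\<pi> x)) - f ((Tm ^^ k) x)\<bar> \<le> \<epsilon> / 2)"
  proof (intro exI conjI)
    show "L > 0" by (rule L0)
    show "\<pi> \<in> measurable (restrict_space borel (Xs \<sigma>)) (restrict_space borel (Xs \<sigma>))"
    proof (rule measurable_restrict_space2)
      show "\<pi> \<in> space (restrict_space borel (Xs \<sigma>)) \<rightarrow> Xs \<sigma>" using \<pi>X by (auto simp: space_restrict_space)
      have bqm: "bq \<in> borel_measurable borel"
      proof -
        have "Fin \<in> sets borel" using Fin_fin by (intro borel_closed finite_imp_closed)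
        thus ?thesis unfolding bq_def by measurable
      qed
      have pm: "(\<lambda>x::nat\<Rightarrow>real. (bq (x 0), qz Q (Complex (x 1) (x 2)))) \<in> borel_measurable borel"
        unfolding Complex_eq using bqm by measurable
      have "\<pi> \<in> borel_measurable borel"
        using measurable_compose[OF pm pt_meas] unfolding \<pi>_def by simp
      thus "\<pi> \<in> borel_measurable (restrict_space borel (Xs \<sigma>))" by (rule measurable_restrict_space1)
    qed
    show "finite (\<pi> ` Xs \<sigma>)"
    proof (rule finite_subset)
      show "\<pi> ` Xs \<sigma> \<subseteq> ptc ` (insert c Fin \<times> qz Q ` sphere 0 1)"
      proof
        fix y assume "y \<in> \<pi> ` Xs \<sigma>"
        then obtain b z where "y = \<pi> (pt b z)" "norm z = 1" by (auto simp: Xs_iff)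
        thus "y \<in> ptc ` (insert c Fin \<times> qz Q ` sphere 0 1)"
          unfolding \<pi>_def ptc_def bq_def by (auto intro!: image_eqI[where x="(bq b, qz Q z)"] simp: bq_def)
      qed
      show "finite (ptc ` (insert c Fin \<times> qz Q ` sphere 0 1))" using Fin_fin qz_fin by simp
    qed
    show "\<forall>x\<in>Xs \<sigma>. (Tm ^^ L) (\<pi> x) = \<pi> x"
    proof
      fix x :: "nat \<Rightarrow> real"
      obtain i where i: "i \<le> j" "bq (x 0) = bet i" using bq_bet by blast
      have "real L * bet i \<in> \<int>" using bet_int[OF i(1)] by (simp add: L_def)
      hence "cis (2 * pi * bet i * real L) = 1"
        using cis_multiple_2pi[of "real L * bet i"] by (simp add: mult_ac)
      thus "(Tm ^^ L) (\<pi> x) = \<pi> x" unfolding \<pi>_def by (simp add: Tm_pow_pt i(2))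
    qed
    show "\<forall>x\<in>Xs \<sigma>. \<forall>k<L. \<forall>f\<in>F. \<bar>f ((Tm ^^ k) (\<pi> x)) - f ((Tm ^^ k) x)\<bar> \<le> \<epsilon> / 2"
    proof (intro ballI allI impI)
      fix x k f assume x: "x \<in> Xs \<sigma>" and k: "k < L" and f: "f \<in> F"
      obtain b z where bz: "x = pt b z" "b \<in> Bs \<sigma>" "norm z = 1" using x by (auto simp: Xs_iff)
      define b' where "b' = bq b"
      define z' where "z' = qz Q z"
      have z'1: "norm z' = 1" and zz: "cmod (z' - z) \<le> 4 / real Q"
        using qz_close[OF Q3 bz(3)] by (auto simp: z'_def)
      have px: "\<pi> x = pt b' z'" by (simp add: \<pi>_def bz b'_def z'_def)
      define p where "p = (b', z' * cis (2 * pi * b' * real k))"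
      define q where "q = (b, z * cis (2 * pi * b * real k))"
      have pK: "p \<in> K" using bqB z'1 by (simp add: p_def K_def b'_def norm_mult)
      have qK: "q \<in> K" using bz by (simp add: q_def K_def norm_mult)
      have e1: "(Tm ^^ k) (\<pi> x) = ptc p" by (simp add: px Tm_pow_pt p_def ptc_def)
      have e2: "(Tm ^^ k) x = ptc q" by (simp add: bz Tm_pow_pt q_def ptc_def)
      have "cmod (z' * cis (2 * pi * b' * real k) - z * cis (2 * pi * b * real k))
          \<le> cmod ((z' - z) * cis (2 * pi * b' * real k)) + cmod (z * (cis (2 * pi * b' * real k) - cis (2 * pi * b * real k)))"
        by (rule order_trans[OF _ norm_triangle_ineq]) (simp add: algebra_simps)
      also have "\<dots> \<le> 4 / real Q + \<bar>2 * pi * b' * real k - 2 * pi * b * real k\<bar>"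
        using zz bz(3) cis_lip[of "2 * pi * b' * real k" "2 * pi * b * real k"] by (simp add: norm_mult)
      also have "\<bar>2 * pi * b' * real k - 2 * pi * b * real k\<bar> = 2 * pi * real k * \<bar>b' - b\<bar>"
      proof -
        have "2 * pi * b' * real k - 2 * pi * b * real k = (2 * pi * real k) * (b' - b)" by (simp add: algebra_simps)
        thus ?thesis by (simp add: abs_mult)
      qed
      finally have zd: "cmod (z' * cis (2 * pi * b' * real k) - z * cis (2 * pi * b * real k))
          \<le> 4 / real Q + 2 * pi * real k * \<bar>b' - b\<bar>" .
      have "dist p q < \<delta>"
      proof (cases "b \<in> Fin")
        case True
        hence "b' = b" by (simp add: b'_def bq_def)
        hence "dist p q \<le> 4 / real Q"
          using dist_pair_le[of b' "z' * cis (2 * pi * b' * real k)" b "z * cis (2 * pi * b * real k)"] zd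
          by (simp add: p_def q_def)
        thus ?thesis using Qd \<delta>(1) by simp
      next
        case False
        hence b'c: "b' = c" by (simp add: b'_def bq_def)
        have cb: "c \<le> b" "b \<le> alph"
        proof -
          from bz(2) False have "b = alph \<or> (\<exists>m\<ge>N. b = bet (\<sigma> m))"
          proof -
            have "b = alph \<or> (\<exists>m. b = bet (\<sigma> m))" using bz(2) unfolding Bs_def by auto
            moreover have "m \<ge> N" if "b = bet (\<sigma> m)" for m
            proof (rule ccontr)
              assume "\<not> m \<ge> N"
              hence "b \<in> Fin" using that unfolding Fin_def by auto
              thus False using False by simp
            qed
            ultimately show ?thesis by blast
          qed
          moreover have "bet (\<sigma> N) \<le> bet (\<sigma> m)" if "m \<ge> N" for m
            using that sm bet_strict_mono by (simp add: strict_mono_less_eq)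
          ultimately show "c \<le> b" "b \<le> alph"
            using bet_less_alph[of j] bet_less_alph by (auto simp: c_def j_def less_imp_le)
        qed
        have "\<bar>b' - b\<bar> \<le> alph - c" using b'c cb by simp
        have "dist p q \<le> \<bar>b' - b\<bar> + (4 / real Q + 2 * pi * real k * \<bar>b' - b\<bar>)"
          using dist_pair_le[of b' "z' * cis (2 * pi * b' * real k)" b "z * cis (2 * pi * b * real k)"] zd
          by (simp add: p_def q_def)
        also have "\<dots> = 4 / real Q + (1 + 2 * pi * real k) * \<bar>b' - b\<bar>" by (simp add: algebra_simps)
        also have "\<dots> \<le> 4 / real Q + (1 + 2 * pi * real L) * (alph - c)"
          using \<open>\<bar>b' - b\<bar> \<le> alph - c\<close> k by (intro add_left_mono mult_mono) auto
        also have "\<dots> < \<delta>" using Qd tail by simp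
        finally show ?thesis .
      qed
      hence "\<bar>f (ptc p) - f (ptc q)\<bar> < \<epsilon> / 2" using \<delta>(2) f pK qK by blast
      thus "\<bar>f ((Tm ^^ k) (\<pi> x)) - f ((Tm ^^ k) x)\<bar> \<le> \<epsilon> / 2" by (simp add: e1 e2)
    qed
  qed
qed


lemma lborel_transl:
  assumes "S \<in> sets borel"
  shows "emeasure lborel ((\<lambda>t::real. c + t) -` S) = emeasure lborel S"
proof -
  have "emeasure lborel S = emeasure (distr lborel borel ((+) c)) S" by (simp add: lborel_distr_plus)
  also have "\<dots> = emeasure lborel ((+) c -` S \<inter> space lborel)"
    by (rule emeasure_distr) (use assms in auto)
  finally show ?thesis by simp
qed

lemma rot_measure:
  assumes B: "B \<in> sets borel" and per: "\<And>t. t + 1 \<in> B \<longleftrightarrow> t \<in> B" and a: "0 \<le> a" "a \<le> 1"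
  shows "emeasure lborel ((\<lambda>t::real. t + a) -` B \<inter> {0..<1}) = emeasure lborel (B \<inter> {0..<1})"
proof -
  have e1: "(\<lambda>t::real. t + a) -` B \<inter> {0..<1} = (\<lambda>t. a + t) -` (B \<inter> {a..<1+a})"
    by (auto simp: add.commute)
  have e2: "B \<inter> {a..<1+a} = (B \<inter> {a..<1}) \<union> (B \<inter> {1..<1+a})" using a by auto
  have e3: "B \<inter> {1..<1+a} = (\<lambda>t. (-1) + t) -` (B \<inter> {0..<a})"
  proof (intro equalityI subsetI)
    fix s assume "s \<in> B \<inter> {1..<1+a}"
    moreover have "(s - 1) + 1 \<in> B \<longleftrightarrow> s - 1 \<in> B" by (rule per)
    ultimately show "s \<in> (\<lambda>t. (-1) + t) -` (B \<inter> {0..<a})" by auto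
  next
    fix s assume "s \<in> (\<lambda>t. (-1) + t) -` (B \<inter> {0..<a})"
    moreover have "(s - 1) + 1 \<in> B \<longleftrightarrow> s - 1 \<in> B" by (rule per)
    ultimately show "s \<in> B \<inter> {1..<1+a}" by auto
  qed
  have "emeasure lborel ((\<lambda>t::real. t + a) -` B \<inter> {0..<1}) = emeasure lborel (B \<inter> {a..<1+a})"
    unfolding e1 by (rule lborel_transl) (use B in auto)
  also have "\<dots> = emeasure lborel (B \<inter> {a..<1}) + emeasure lborel (B \<inter> {1..<1+a})"
    unfolding e2 by (rule plus_emeasure[symmetric]) (use B in auto)
  also have "emeasure lborel (B \<inter> {1..<1+a}) = emeasure lborel (B \<inter> {0..<a})"
    unfolding e3 by (rule lborel_transl) (use B in auto)
  also have "emeasure lborel (B \<inter> {a..<1}) + emeasure lborel (B \<inter> {0..<a}) = emeasure lborel ((B \<inter> {a..<1}) \<union> (B \<inter> {0..<a}))"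
    by (rule plus_emeasure) (use B in auto)
  also have "(B \<inter> {a..<1}) \<union> (B \<inter> {0..<a}) = B \<inter> {0..<1}" using a by auto
  finally show ?thesis .
qed

definition U0 :: "real measure" where "U0 = uniform_measure lborel {0..<1}"

lemma prob_U0: "prob_space U0"
  unfolding U0_def by (rule prob_space_uniform_measure) auto

lemma sets_U0[simp, measurable_cong]: "sets U0 = sets borel" by (simp add: U0_def)
lemma space_U0[simp]: "space U0 = UNIV" by (simp add: U0_def)

lemma distr_rot:
  assumes g: "g \<in> measurable borel N" and per: "\<And>t. g (t + 1) = g t" and a: "0 \<le> a" "a \<le> 1"
  shows "distr U0 N (\<lambda>t. g (t + a)) = distr U0 N g"
proof (rule measure_eqI)
  have gU: "g \<in> measurable U0 N" using g by (simp add: measurable_cong_sets[OF sets_U0 refl])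
  have ga: "(\<lambda>t. g (t + a)) \<in> measurable borel N" using g by measurable
  hence gaU: "(\<lambda>t. g (t + a)) \<in> measurable U0 N" by (simp add: measurable_cong_sets[OF sets_U0 refl])
  show "sets (distr U0 N (\<lambda>t. g (t + a))) = sets (distr U0 N g)" by simp
  fix A assume "A \<in> sets (distr U0 N (\<lambda>t. g (t + a)))"
  hence A: "A \<in> sets N" by simp
  define B where "B = g -` A"
  have Bb: "B \<in> sets borel" unfolding B_def using measurable_sets[OF g A] by simp
  have perB: "t + 1 \<in> B \<longleftrightarrow> t \<in> B" for t by (simp add: B_def per)
  have "emeasure (distr U0 N (\<lambda>t. g (t + a))) A = emeasure U0 ((\<lambda>t. t + a) -` B)"
    by (simp add: emeasure_distr[OF gaU A] B_def vimage_def)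
  also have "\<dots> = emeasure lborel ((\<lambda>t. t + a) -` B \<inter> {0..<1})"
    unfolding U0_def using Bb measurable_sets[OF _ Bb, of "\<lambda>t::real. t + a" borel] by (subst emeasure_uniform_measure) (auto simp: Int_commute divide_ennreal_def)
  also have "\<dots> = emeasure lborel (B \<inter> {0..<1})" by (rule rot_measure[OF Bb perB a])
  also have "\<dots> = emeasure U0 B"
    unfolding U0_def using Bb by (subst emeasure_uniform_measure) (auto simp: Int_commute divide_ennreal_def)
  also have "\<dots> = emeasure (distr U0 N g) A"
    by (simp add: emeasure_distr[OF gU A] B_def)
  finally show "emeasure (distr U0 N (\<lambda>t. g (t + a))) A = emeasure (distr U0 N g) A" .
qed


definition XX :: "((nat \<Rightarrow> real) \<times> (nat \<Rightarrow> real)) set" where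
  "XX = Xs (\<lambda>m. 2 * m + 1) \<times> Xs (\<lambda>m. 2 * m)"

abbreviation TT where "TT \<equiv> prod_map Tm Tm"

definition hh :: "(nat \<Rightarrow> real) \<times> (nat \<Rightarrow> real) \<Rightarrow> real" where
  "hh p = fst p 1 * snd p 1 + fst p 2 * snd p 2"

lemma sm1: "strict_mono (\<lambda>m::nat. 2 * m + 1)" by (rule strict_monoI) simp
lemma sm2: "strict_mono (\<lambda>m::nat. 2 * m)" by (rule strict_monoI) simp

lemma TT_eq: "TT = (\<lambda>p. (Tm (fst p), Tm (snd p)))"
  by (simp add: prod_map_def fun_eq_iff split_beta)

lemma TT_pow: "(TT ^^ k) (x, y) = ((Tm ^^ k) x, (Tm ^^ k) y)"
  by (induction k) (auto simp: TT_eq)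

lemma hh_pt: "hh (pt b1 w1, pt b2 w2) = Re (w1 * cnj w2)"
  by (simp add: hh_def)

lemma continuous_hh: "continuous_on S hh"
  unfolding hh_def by (intro continuous_intros continuous_on_product_then_coordinatewise continuous_on_fst continuous_on_snd continuous_on_id)

lemma continuous_TT: "continuous_on S TT"
  unfolding TT_eq by (intro continuous_intros continuous_on_compose2[OF continuous_Tm[of UNIV]]) auto

lemma compact_XX: "compact XX"
  unfolding XX_def by (intro compact_Times compact_Xs sm1 sm2)

lemma XX_iff: "p \<in> XX \<longleftrightarrow> (\<exists>b1 z1 b2 z2. p = (pt b1 z1, pt b2 z2) \<and> b1 \<in> Bs (\<lambda>m. 2 * m + 1) \<and> norm z1 = 1
    \<and> b2 \<in> Bs (\<lambda>m. 2 * m) \<and> norm z2 = 1)"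
  unfolding XX_def by (cases p) (auto simp: Xs_iff)

lemma TT_XX: "p \<in> XX \<Longrightarrow> TT p \<in> XX"
  unfolding XX_def TT_eq using Tm_Xs by (auto simp: mem_Times_iff)

lemma TT_inj: "p \<in> XX \<Longrightarrow> q \<in> XX \<Longrightarrow> TT p = TT q \<Longrightarrow> p = q"
  unfolding XX_def TT_eq by (auto simp: mem_Times_iff prod_eq_iff dest: Ti_Tm arg_cong[where f=Ti]) (metis Ti_Tm)+

lemma hh_bound: "p \<in> XX \<Longrightarrow> \<bar>hh p\<bar> \<le> 1"
proof -
  assume "p \<in> XX"
  then obtain b1 z1 b2 z2 where p: "p = (pt b1 z1, pt b2 z2)" "norm z1 = 1" "norm z2 = 1" by (auto simp: XX_iff)
  have "\<bar>Re (z1 * cnj z2)\<bar> \<le> cmod (z1 * cnj z2)" by (rule abs_Re_le_cmod)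
  also have "\<dots> = 1" using p by (simp add: norm_mult)
  finally show ?thesis using p by (simp add: hh_pt)
qed

lemma cis_1_int: "cis x = 1 \<Longrightarrow> x / (2 * pi) \<in> \<int>"
proof -
  assume "cis x = 1"
  hence "cos x = 1" by (simp add: complex_eq_iff)
  then obtain n :: int where "x = real_of_int n * 2 * pi" using cos_one_2pi_int by blast
  thus ?thesis by simp
qed

lemma Ints_small: "x \<in> \<int> \<Longrightarrow> \<bar>x\<bar> < 1 \<Longrightarrow> x = (0::real)"
  by (auto elim!: Ints_cases)

lemma Bs_rat:
  assumes "b \<in> Bs \<sigma>" "real n * b \<in> \<int>" "n > 0"
  shows "\<exists>m. b = bet (\<sigma> m)"
  using assms alph_irrational[of n] unfolding Bs_def by auto

lemma theta_nonint:
  "bet (2 * m + 1) - bet (2 * m') \<notin> \<int>"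
proof
  assume h: "bet (2 * m + 1) - bet (2 * m') \<in> \<int>"
  have "\<bar>bet (2 * m + 1) - bet (2 * m')\<bar> < 1"
    using bet_nonneg[of "2*m+1"] bet_nonneg[of "2*m'"] bet_less_alph[of "2*m+1"] bet_less_alph[of "2*m'"] alph_le1
    by linarith
  hence "bet (2 * m + 1) = bet (2 * m')" using Ints_small[OF h] by simp
  hence "2 * m + 1 = 2 * m'" using strict_mono_eq[OF bet_strict_mono] by blast
  thus False by presburger
qed

lemma orbit_sum_zero:
  assumes "p \<in> XX" "K > 0" "real K * fst p 0 \<in> \<int>" "real K * snd p 0 \<in> \<int>"
  shows "(\<Sum>k<K. hh ((TT ^^ k) p)) = 0"
proof -
  obtain b1 z1 b2 z2 where p: "p = (pt b1 z1, pt b2 z2)" "b1 \<in> Bs (\<lambda>m. 2 * m + 1)" "b2 \<in> Bs (\<lambda>m. 2 * m)"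
    using assms(1) by (auto simp: XX_iff)
  obtain m where m: "b1 = bet (2 * m + 1)" using Bs_rat[OF p(2) _ assms(2)] assms(3) p(1) by auto
  obtain m' where m': "b2 = bet (2 * m')" using Bs_rat[OF p(3) _ assms(2)] assms(4) p(1) by auto
  define \<theta> where "\<theta> = b1 - b2"
  define w where "w = cis (2 * pi * \<theta>)"
  have Kt: "real K * \<theta> \<in> \<int>" using assms(3,4) p(1) by (simp add: \<theta>_def right_diff_distrib)
  have w1: "w \<noteq> 1"
  proof
    assume "w = 1"
    hence "(2 * pi * \<theta>) / (2 * pi) \<in> \<int>" unfolding w_def by (rule cis_1_int)
    hence "\<theta> \<in> \<int>" by simp
    thus False using theta_nonint m m' by (simp add: \<theta>_def)
  qed
  have "w ^ K = cis (real K * (2 * pi * \<theta>))" by (simp add: w_def Complex.DeMoivre)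
  also have "\<dots> = cis (2 * pi * (real K * \<theta>))" by (simp add: mult_ac)
  also have "\<dots> = 1" by (rule cis_multiple_2pi[OF Kt])
  finally have wK: "w ^ K = 1" .
  have trm: "hh ((TT ^^ k) p) = Re ((z1 * cnj z2) * w ^ k)" for k
  proof -
    have "hh ((TT ^^ k) p) = Re (z1 * cis (2 * pi * b1 * real k) * cnj (z2 * cis (2 * pi * b2 * real k)))"
      by (simp add: p(1) TT_pow Tm_pow_pt hh_pt)
    also have "z1 * cis (2 * pi * b1 * real k) * cnj (z2 * cis (2 * pi * b2 * real k))
        = (z1 * cnj z2) * (cis (2 * pi * b1 * real k) * cis (- (2 * pi * b2 * real k)))"
      by (simp add: cis_cnj mult_ac)
    also have "cis (2 * pi * b1 * real k) * cis (- (2 * pi * b2 * real k)) = w ^ k"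
      unfolding w_def Complex.DeMoivre cis_mult by (simp add: \<theta>_def algebra_simps)
    finally show ?thesis .
  qed
  have "(\<Sum>k<K. hh ((TT ^^ k) p)) = Re ((z1 * cnj z2) * (\<Sum>k<K. w ^ k))"
    by (simp add: trm sum_distrib_left Re_sum)
  also have "(\<Sum>k<K. w ^ k) = 0" using w1 wK by (simp add: sum_gp_strict)
  finally show ?thesis by simp
qed


lemma XX_borel: "XX \<in> sets borel"
  using compact_XX by (simp add: compact_imp_closed borel_closed)

lemma periodic_zero:
  assumes "periodic_measure XX TT \<nu>"
  shows "(\<integral>p. hh p \<partial>\<nu>) = 0"
proof -
  have setsnu: "sets \<nu> = sets (restrict_space borel XX)" and pnu: "prob_space \<nu>"
    and Tnu: "TT \<in> measurable \<nu> \<nu>" and Dnu: "distr \<nu> \<nu> TT = \<nu>"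
    using assms by (auto simp: periodic_measure_def invariant_prob_def)
  obtain S where Sfin: "finite S" and SX: "S \<subseteq> XX" and S1: "emeasure \<nu> S = 1"
    using assms by (auto simp: periodic_measure_def)
  interpret prob_space \<nu> by (rule pnu)
  have spnu: "space \<nu> = XX"
    using sets_eq_imp_space_eq[OF setsnu] by (simp add: space_restrict_space)
  have setsI: "A \<subseteq> XX \<Longrightarrow> A \<in> sets borel \<Longrightarrow> A \<in> sets \<nu>" for A
    unfolding setsnu using XX_borel by (subst sets_restrict_space_iff) auto
  have sing: "s \<in> XX \<Longrightarrow> {s} \<in> sets \<nu>" for s by (rule setsI) auto
  have Ssets: "S \<in> sets \<nu>" using SX Sfin by (intro setsI borel_closed finite_imp_closed) auto
  have mass_inv: "measure \<nu> {TT s} = measure \<nu> {s}" if sX: "s \<in> XX" for s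
  proof -
    have "TT -` {TT s} \<inter> space \<nu> = {s}"
    proof (intro equalityI subsetI)
      fix x assume "x \<in> TT -` {TT s} \<inter> space \<nu>"
      hence "x \<in> XX" "TT x = TT s" using spnu by auto
      thus "x \<in> {s}" using TT_inj[OF _ sX] by auto
    qed (use sX spnu in auto)
    hence "emeasure (distr \<nu> \<nu> TT) {TT s} = emeasure \<nu> {s}"
      using emeasure_distr[OF Tnu sing[OF TT_XX[OF sX]]] by simp
    thus ?thesis using Dnu by (simp add: measure_def)
  qed
  have probS: "prob S = 1" using S1 by (simp add: emeasure_eq_measure)
  have compl0: "prob (space \<nu> - S) = 0" using prob_compl[OF Ssets] probS by simp
  define P where "P = {s \<in> S. measure \<nu> {s} > 0}"
  have Pfin: "finite P" using Sfin by (simp add: P_def)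
  have PX: "P \<subseteq> XX" using SX by (auto simp: P_def)
  have PT: "TT s \<in> P" if sP: "s \<in> P" for s
  proof -
    have sX: "s \<in> XX" using sP PX by auto
    have pos: "measure \<nu> {TT s} > 0" using mass_inv[OF sX] sP by (simp add: P_def)
    have "TT s \<in> S"
    proof (rule ccontr)
      assume "TT s \<notin> S"
      hence "{TT s} \<subseteq> space \<nu> - S" using TT_XX[OF sX] spnu by auto
      hence "measure \<nu> {TT s} \<le> prob (space \<nu> - S)"
        by (intro finite_measure_mono) (use Ssets in auto)
      thus False using pos compl0 by simp
    qed
    thus ?thesis using pos by (simp add: P_def)
  qed
  have orbP: "s \<in> P \<Longrightarrow> (TT ^^ k) s \<in> P" for s k
    by (induction k) (auto intro: PT)
  have per: "\<exists>n>0. real n * fst s 0 \<in> \<int> \<and> real n * snd s 0 \<in> \<int>" if sP: "s \<in> P" for s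
  proof -
    have "\<not> inj (\<lambda>k. (TT ^^ k) s)"
    proof
      assume "inj (\<lambda>k. (TT ^^ k) s)"
      hence "infinite (range (\<lambda>k. (TT ^^ k) s))" by (rule range_inj_infinite)
      moreover have "range (\<lambda>k. (TT ^^ k) s) \<subseteq> P" using orbP[OF sP] by auto
      ultimately show False using Pfin finite_subset by blast
    qed
    then obtain i j where ij: "i \<noteq> j" "(TT ^^ i) s = (TT ^^ j) s" unfolding inj_def by blast
    have "\<exists>i j. i < j \<and> (TT ^^ i) s = (TT ^^ j) s"
    proof (cases "i < j")
      case True then show ?thesis using ij by blast
    next
      case False then show ?thesis using ij by (intro exI[of _ j] exI[of _ i]) auto
    qed
    then obtain i j where ij: "i < j" "(TT ^^ i) s = (TT ^^ j) s" by blast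
    have "s \<in> XX" using sP PX by auto
    then obtain b1 z1 b2 z2 where s: "s = (pt b1 z1, pt b2 z2)" "norm z1 = 1" "norm z2 = 1"
      unfolding XX_iff by blast
    have key: "real (j - i) * b \<in> \<int>" if zb: "norm z = 1" "z * cis (2 * pi * b * real i) = z * cis (2 * pi * b * real j)" for z b
    proof -
      have z0: "z \<noteq> 0" using zb(1) by auto
      have c: "cis (2 * pi * b * real i) = cis (2 * pi * b * real j)" using zb(2) z0 by simp
      have "cis (2 * pi * b * real j) = cis (2 * pi * b * real i) * cis (2 * pi * (real (j - i) * b))"
        using ij(1) by (simp add: cis_mult of_nat_diff algebra_simps)
      hence "cis (2 * pi * (real (j - i) * b)) = 1" using c by simp
      hence "(2 * pi * (real (j - i) * b)) / (2 * pi) \<in> \<int>" by (rule cis_1_int)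
      thus ?thesis by simp
    qed
    have "real (j - i) * b1 \<in> \<int>" using ij(2) s by (intro key[OF s(2)]) (simp add: TT_pow Tm_pow_pt)
    moreover have "real (j - i) * b2 \<in> \<int>" using ij(2) s by (intro key[OF s(3)]) (simp add: TT_pow Tm_pow_pt)
    ultimately have "j - i > 0 \<and> real (j - i) * fst s 0 \<in> \<int> \<and> real (j - i) * snd s 0 \<in> \<int>"
      using ij(1) by (simp add: s(1))
    thus ?thesis by blast
  qed
  have "\<forall>s\<in>P. \<exists>n. n > 0 \<and> real n * fst s 0 \<in> \<int> \<and> real n * snd s 0 \<in> \<int>"
    using per by blast
  then obtain nf where nf: "\<forall>s\<in>P. nf s > 0 \<and> real (nf s) * fst s 0 \<in> \<int> \<and> real (nf s) * snd s 0 \<in> \<int>"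
    by (rule bchoice[elim_format]) blast
  define K where "K = (\<Prod>s\<in>P. nf s)"
  have K0: "K > 0" unfolding K_def using nf by (simp add: prod_pos)
  have Kint: "real K * fst s 0 \<in> \<int> \<and> real K * snd s 0 \<in> \<int>" if sP: "s \<in> P" for s
  proof -
    have "K = nf s * (\<Prod>t\<in>P - {s}. nf t)" unfolding K_def using Pfin sP by (simp add: prod.remove)
    hence Ke: "real K = real (nf s) * real (\<Prod>t\<in>P - {s}. nf t)" by simp
    have a1: "real (nf s) * fst s 0 \<in> \<int>" and a2: "real (nf s) * snd s 0 \<in> \<int>" using nf sP by auto
    have e1: "real K * fst s 0 = (real (nf s) * fst s 0) * real (\<Prod>t\<in>P - {s}. nf t)"
      unfolding Ke by (simp only: mult_ac)
    have e2: "real K * snd s 0 = (real (nf s) * snd s 0) * real (\<Prod>t\<in>P - {s}. nf t)"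
      unfolding Ke by (simp only: mult_ac)
    have "real K * fst s 0 \<in> \<int>" unfolding e1 by (rule Ints_mult[OF a1 Ints_of_nat])
    moreover have "real K * snd s 0 \<in> \<int>" unfolding e2 by (rule Ints_mult[OF a2 Ints_of_nat])
    ultimately show ?thesis by blast
  qed
  have aeS: "AE x in \<nu>. x \<in> S"
  proof (rule AE_I'[of "space \<nu> - S"])
    show "space \<nu> - S \<in> null_sets \<nu>"
      using compl0 Ssets by (auto simp: null_sets_def emeasure_eq_measure)
  qed auto
  have aeP0: "AE x in \<nu>. \<forall>s\<in>S - P. x \<noteq> s"
  proof (rule AE_finite_allI)
    show "finite (S - P)" using Sfin by simp
    fix s assume s: "s \<in> S - P"
    hence sX: "s \<in> XX" using SX by auto
    have "measure \<nu> {s} = 0" using s measure_nonneg[of \<nu> "{s}"] by (auto simp: P_def)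
    hence "{s} \<in> null_sets \<nu>" using sing[OF sX] by (auto simp: null_sets_def emeasure_eq_measure)
    thus "AE x in \<nu>. x \<noteq> s" by (rule AE_I') auto
  qed
  have aeP: "AE x in \<nu>. x \<in> P" using aeS aeP0 by eventually_elim (auto simp: P_def)
  have ae0: "AE x in \<nu>. (\<Sum>k<K. hh ((TT ^^ k) x)) = 0"
    using aeP by eventually_elim (use orbit_sum_zero K0 Kint PX in auto)
  have hm: "hh \<in> borel_measurable \<nu>"
    using borel_measurable_continuous_on_restrict[OF continuous_hh[of XX]]
    by (simp add: measurable_cong_sets[OF setsnu refl])
  have Tk: "(TT ^^ k) \<in> measurable \<nu> \<nu>" for k
    by (induction k) (auto intro: measurable_compose[OF _ Tnu] simp: measurable_ident_sets)
  have TkX: "x \<in> XX \<Longrightarrow> (TT ^^ k) x \<in> XX" for x k by (induction k) (auto intro: TT_XX)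
  have hkm: "(\<lambda>x. hh ((TT ^^ k) x)) \<in> borel_measurable \<nu>" for k
    using measurable_compose[OF Tk hm] .
  have hki: "integrable \<nu> (\<lambda>x. hh ((TT ^^ k) x))" for k
    by (rule integrable_const_bound[where B=1, OF AE_I2 hkm]) (use hh_bound TkX spnu in auto)
  have "real K * (\<integral>p. hh p \<partial>\<nu>) = (\<Sum>k<K. (\<integral>x. hh ((TT ^^ k) x) \<partial>\<nu>))"
    using inv_integral_iter[OF Tnu Dnu hm] by simp
  also have "\<dots> = (\<integral>x. (\<Sum>k<K. hh ((TT ^^ k) x)) \<partial>\<nu>)"
    by (rule Bochner_Integration.integral_sum[symmetric]) (rule hki)
  also have "\<dots> = (\<integral>x. 0 \<partial>\<nu>)"
    by (rule integral_cong_AE) (use hkm ae0 in auto)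
  also have "\<dots> = 0" by simp
  finally show ?thesis using K0 by simp
qed


definition Phi :: "real \<Rightarrow> (nat \<Rightarrow> real) \<times> (nat \<Rightarrow> real)" where
  "Phi t = (pt alph (cis (2 * pi * t)), pt alph (cis (2 * pi * t)))"

lemma alph_Bs: "alph \<in> Bs \<sigma>" by (simp add: Bs_def)

lemma Phi_XX: "Phi t \<in> XX"
  unfolding XX_def Phi_def by (auto simp: Xs_iff alph_Bs)

lemma continuous_Phi: "continuous_on UNIV Phi"
  unfolding Phi_def
  by (intro continuous_on_Pair; rule continuous_pt_comp; intro continuous_intros)

lemma Phi_per: "Phi (t + 1) = Phi t"
proof -
  have "cis (2 * pi * (t + 1)) = cis (2 * pi * t) * cis (2 * pi)"
    by (simp add: cis_mult algebra_simps)
  thus ?thesis by (simp add: Phi_def)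
qed

lemma TT_Phi: "TT (Phi t) = Phi (t + alph)"
proof -
  have "cis (2 * pi * t) * cis (2 * pi * alph) = cis (2 * pi * (t + alph))"
    by (simp add: cis_mult algebra_simps)
  thus ?thesis by (simp add: Phi_def TT_eq)
qed

lemma hh_Phi: "hh (Phi t) = 1"
proof -
  have "Re (cis (2 * pi * t) * cnj (cis (2 * pi * t))) = 1"
    by (simp add: cis_cnj cis_mult)
  thus ?thesis by (simp add: Phi_def hh_pt)
qed

definition MM where "MM = restrict_space borel XX"
definition lam where "lam = distr U0 MM Phi"

lemma Phi_meas: "Phi \<in> measurable borel MM"
  unfolding MM_def
  by (rule measurable_restrict_space2) (auto simp: Phi_XX borel_measurable_continuous_onI[OF continuous_Phi])

lemma Phi_measU: "Phi \<in> measurable U0 MM"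
  using Phi_meas by (simp add: measurable_cong_sets[OF sets_U0 refl])

lemma TT_MM: "TT \<in> measurable MM MM"
  unfolding MM_def
  by (rule measurable_restrict_space2)
     (auto simp: space_restrict_space TT_XX intro: borel_measurable_continuous_on_restrict[OF continuous_TT])

lemma lam_inv: "invariant_prob XX TT lam"
  unfolding invariant_prob_def
proof (intro conjI)
  show sl: "sets lam = sets (restrict_space borel XX)" by (simp add: lam_def MM_def)
  show "prob_space lam" unfolding lam_def
    by (rule prob_space.prob_space_distr[OF prob_U0 Phi_measU])
  show "TT \<in> measurable lam lam"
    using TT_MM sl by (simp add: measurable_cong_sets[of lam MM lam MM] MM_def)
  have a01: "0 \<le> alph" "alph \<le> 1" using bet_nonneg[of 0] bet_less_alph[of 0] alph_le1 by auto
  have "distr lam lam TT = distr lam MM TT" by (rule distr_cong) (auto simp: lam_def)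
  also have "\<dots> = distr U0 MM (TT \<circ> Phi)" unfolding lam_def by (rule distr_distr[OF TT_MM Phi_measU])
  also have "\<dots> = distr U0 MM (\<lambda>t. Phi (t + alph))" by (rule distr_cong) (auto simp: TT_Phi)
  also have "\<dots> = distr U0 MM Phi" by (rule distr_rot[OF Phi_meas Phi_per a01])
  finally show "distr lam lam TT = lam" by (simp add: lam_def)
qed

lemma lam_int: "(\<integral>p. hh p \<partial>lam) = 1"
proof -
  have hm: "hh \<in> borel_measurable MM"
    unfolding MM_def by (rule borel_measurable_continuous_on_restrict[OF continuous_hh])
  have "(\<integral>p. hh p \<partial>lam) = (\<integral>t. hh (Phi t) \<partial>U0)" unfolding lam_def by (rule integral_distr[OF Phi_measU hm])
  also have "\<dots> = (\<integral>t. 1 \<partial>U0)" by (simp add: hh_Phi)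
  also have "\<dots> = 1" using prob_space.prob_space[OF prob_U0] by simp
  finally show ?thesis .
qed

lemma not_dense: "\<not> dense_periodic_measures XX TT"
proof
  assume "dense_periodic_measures XX TT"
  hence "\<forall>F \<epsilon>. finite F \<and> (\<forall>f\<in>F. continuous_on XX f) \<and> \<epsilon> > (0::real) \<longrightarrow>
           (\<exists>\<nu>. periodic_measure XX TT \<nu> \<and> (\<forall>f\<in>F. \<bar>(\<integral>x. f x \<partial>\<nu>) - (\<integral>x. f x \<partial>lam)\<bar> < \<epsilon>))"
    unfolding dense_periodic_measures_def using lam_inv by blast
  hence "\<exists>\<nu>. periodic_measure XX TT \<nu> \<and> (\<forall>f\<in>{hh}. \<bar>(\<integral>x. f x \<partial>\<nu>) - (\<integral>x. f x \<partial>lam)\<bar> < 1/2)"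
    using continuous_hh[of XX] by (metis finite.emptyI finite.insertI singletonD half_gt_zero zero_less_one)
  then obtain \<nu> where "periodic_measure XX TT \<nu>" "\<bar>(\<integral>x. hh x \<partial>\<nu>) - (\<integral>x. hh x \<partial>lam)\<bar> < 1/2" by auto
  thus False using periodic_zero lam_int by simp
qed

theorem theorem1p3:
  shows "\<exists>(X1 :: (nat \<Rightarrow> real) set) T1 (X2 :: (nat \<Rightarrow> real) set) T2.
     dynamical_system X1 T1 \<and> dynamical_system X2 T2 \<and>
     dense_periodic_measures X1 T1 \<and> dense_periodic_measures X2 T2 \<and>
     \<not> dense_periodic_measures (X1 \<times> X2) (prod_map T1 T2)"
  using dyn_Xs[OF sm1] dyn_Xs[OF sm2] dense_Xs[OF sm1] dense_Xs[OF sm2] not_dense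
  unfolding XX_def by blast


end
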